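(* Let $X$ be a finite set, $\equiv$ an equivalence relation on $X$, and $k$ a natural number. Let $\mathcal{B}$ be the set of subsets $B \subseteq X$ with $|B| = k$ such that not all $k$ elements of $B$ are equivalent under $\equiv$. If $\mathcal{B} \neq \emptyset$, then $\mathcal{B}$ is the set of bases of a matroid on $X$. *)

theory Defs
  imports Main
begin

definition matroid_bases :: "'a set \<Rightarrow> 'a set set \<Rightarrow> bool" where
  "matroid_bases X \<B> \<longleftrightarrow>
     finite X \<and> \<B> \<noteq> {} \<and> (\<forall>B\<in>\<B>. B \<subseteq> X) \<and>
     (\<forall>B1\<in>\<B>. \<forall>B2\<in>\<B>. \<forall>x\<in>B1 - B2. \<exists>y\<in>B2 - B1. insert y (B1 - {x}) \<in> \<B>)"

end

theory Submission
  imports Defs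
begin

theorem proposition3p16:
  fixes X :: "'a set" and R :: "('a \<times> 'a) set" and k :: nat
  assumes "finite X"
    and "equiv X R"
    and "{B. B \<subseteq> X \<and> card B = k \<and> \<not> (\<forall>x\<in>B. \<forall>y\<in>B. (x, y) \<in> R)} \<noteq> {}"
  shows "matroid_bases X {B. B \<subseteq> X \<and> card B = k \<and> \<not> (\<forall>x\<in>B. \<forall>y\<in>B. (x, y) \<in> R)}"
proof -
  let ?F = "{B. B \<subseteq> X \<and> card B = k \<and> \<not> (\<forall>x\<in>B. \<forall>y\<in>B. (x, y) \<in> R)}"
  have symR: "\<And>a b. (a,b) \<in> R \<Longrightarrow> (b,a) \<in> R" using assms(2) unfolding equiv_def sym_def by blast
  have reflR: "\<And>a. a \<in> X \<Longrightarrow> (a,a) \<in> R" using assms(2) unfolding equiv_def refl_on_def by blast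
  have transR: "\<And>a b c. (a,b) \<in> R \<Longrightarrow> (b,c) \<in> R \<Longrightarrow> (a,c) \<in> R"
    using assms(2) unfolding equiv_def trans_def by blast
  have ex: "\<exists>y\<in>B2 - B1. insert y (B1 - {x}) \<in> ?F"
    if B1: "B1 \<in> ?F" and B2: "B2 \<in> ?F" and x: "x \<in> B1 - B2" for B1 B2 x
  proof -
    let ?C = "B1 - {x}"
    have fin1: "finite B1" and fin2: "finite B2"
      using B1 B2 assms(1) finite_subset by auto
    have mem: "insert y ?C \<in> ?F" if y: "y \<in> B2 - B1" and np: "\<not> (\<forall>a\<in>insert y ?C. \<forall>b\<in>insert y ?C. (a, b) \<in> R)" for y
    proof -
      have e1: "card (insert y ?C) = card ?C + 1" using y fin1 by simp
      have e2: "card ?C = card B1 - 1" using x fin1 by simp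
      have "card (insert y ?C) = k"
      proof -
        have "card B1 > 0" using fin1 x card_gt_0_iff by blast
        moreover have "card B1 = k" using B1 by simp
        ultimately show ?thesis using e1 e2 by linarith
      qed
      moreover have "insert y ?C \<subseteq> X" using y B1 B2 by blast
      ultimately show ?thesis using np by blast
    qed
    show ?thesis
    proof (rule ccontr)
      assume nex: "\<not> ?thesis"
      have allP: "\<forall>a\<in>insert y ?C. \<forall>b\<in>insert y ?C. (a, b) \<in> R" if "y \<in> B2 - B1" for y
      proof (rule ccontr)
        assume "\<not> (\<forall>a\<in>insert y ?C. \<forall>b\<in>insert y ?C. (a, b) \<in> R)"
        then have "insert y ?C \<in> ?F" using mem that by blast
        then show False using nex that by blast
      qed
      have "\<not> B2 \<subseteq> B1"
      proof
        assume "B2 \<subseteq> B1"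
        moreover have "card B2 = card B1" using B1 B2 by simp
        ultimately have "B2 = B1" using fin1 card_subset_eq by blast
        then show False using x by simp
      qed
      then obtain y0 where y0: "y0 \<in> B2 - B1" by blast
      have "?C \<noteq> {}"
      proof
        assume "?C = {}"
        then have "B1 = {x}" using x by auto
        moreover have "x \<in> X" using x B1 by blast
        ultimately show False using B1 reflR by simp
      qed
      then obtain c where c: "c \<in> ?C" by blast
      have toc: "(z, c) \<in> R" if "z \<in> B2" for z
      proof (cases "z \<in> B1")
        case True
        then have "z \<in> ?C" using x that by auto
        then show ?thesis using allP[OF y0] c by blast
      next
        case False
        then show ?thesis using allP[of z] c that by blast
      qed
      have "\<forall>a\<in>B2. \<forall>b\<in>B2. (a, b) \<in> R"
      proof (intro ballI)
        fix a b assume "a \<in> B2" "b \<in> B2"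
        then show "(a, b) \<in> R" using toc[of a] toc[of b] symR transR by metis
      qed
      then show False using B2 by simp
    qed
  qed
  show ?thesis
    unfolding matroid_bases_def
  proof (intro conjI)
    show "\<forall>B1\<in>?F. \<forall>B2\<in>?F. \<forall>x\<in>B1 - B2. \<exists>y\<in>B2 - B1. insert y (B1 - {x}) \<in> ?F"
      by (intro ballI, rule ex) assumption+
  qed (use assms(1) assms(3) in \<open>simp_all\<close>)
qed

end
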